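(* Let $f\in\mathcal{K}$ have radius of convergence $R>0$, with Khinchin family $(X_t)$ and fulcrum $F$, and let $Z$ be a standard normal random variable. Fix an integer $n\ge3$. Then $$\lim_{t\uparrow R}\mathbf{E}(\breve{X}_t^j)=\mathbf{E}(Z^j)\quad\text{for every }3\le j\le n$$ if and only if $$\lim_{s\uparrow\ln R}\frac{F^{(j)}(s)}{F''(s)^{j/2}}=0\quad\text{for every }3\le j\le n.$$
   Context: The class $\mathcal{K}$ consists of non-constant power series $f(z)=\sum_{n\ge0}a_nz^n$ with radius of convergence $R\in(0,+\infty]$, with $a_n\ge 0$ for all $n$ and $a_0>0$. For $t\in(0,R)$, $X_t$ is the random variable with $\mathbf{P}(X_t=n)=a_nt^n/f(t)$, $n\ge0$. Write $m_f(t)=\mathbf{E}(X_t)=tf'(t)/f(t)$, $\sigma_f^2(t)=\mathbf{V}(X_t)=t\,m_f'(t)>0$, and $\breve{X}_t=(X_t-m_f(t))/\sigma_f(t)$. The fulcrum of $f$ is $F(s)=\ln f(e^s)$ for real $s<\ln R$ (with $\ln R=+\infty$ if $R=+\infty$); $F''(s)=\sigma_f^2(e^s)$. Limits $t\uparrow R$ mean $t\to+\infty$ when $R=+\infty$. *)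

theory Defs
  imports "HOL-Probability.Probability"
begin

definition ps_f :: "(nat \<Rightarrow> real) \<Rightarrow> real \<Rightarrow> real" where
  "ps_f a t = (\<Sum>k. a k * t ^ k)"

text \<open>Khinchin family: P(X_t = k) = a_k t^k / f(t).\<close>
definition kh_prob :: "(nat \<Rightarrow> real) \<Rightarrow> real \<Rightarrow> nat \<Rightarrow> real" where
  "kh_prob a t k = a k * t ^ k / ps_f a t"

definition kh_mean :: "(nat \<Rightarrow> real) \<Rightarrow> real \<Rightarrow> real" where
  "kh_mean a t = (\<Sum>k. real k * kh_prob a t k)"

definition kh_var :: "(nat \<Rightarrow> real) \<Rightarrow> real \<Rightarrow> real" where
  "kh_var a t = (\<Sum>k. (real k - kh_mean a t)^2 * kh_prob a t k)"

definition kh_norm_moment :: "(nat \<Rightarrow> real) \<Rightarrow> nat \<Rightarrow> real \<Rightarrow> real" where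
  "kh_norm_moment a j t =
     (\<Sum>k. ((real k - kh_mean a t) / sqrt (kh_var a t)) ^ j * kh_prob a t k)"

definition fulcrum :: "(nat \<Rightarrow> real) \<Rightarrow> real \<Rightarrow> real" where
  "fulcrum a s = ln (ps_f a (exp s))"

definition std_normal_moment :: "nat \<Rightarrow> real" where
  "std_normal_moment j = integral\<^sup>L lborel (\<lambda>x. std_normal_density x * x ^ j)"

definition radius_filter :: "(nat \<Rightarrow> real) \<Rightarrow> real filter" where
  "radius_filter a = (if conv_radius a = \<infinity> then at_top
                      else at_left (real_of_ereal (conv_radius a)))"

definition log_radius_filter :: "(nat \<Rightarrow> real) \<Rightarrow> real filter" where
  "log_radius_filter a = (if conv_radius a = \<infinity> then at_top
                          else at_left (ln (real_of_ereal (conv_radius a))))"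

end

theory Submission imports Defs "HOL-Real_Asymp.Real_Asymp" begin

lemma exists_bigger_in_radius:
  fixes a :: "nat \<Rightarrow> real"
  assumes "ereal (exp u) < conv_radius a"
  shows "\<exists>v>u. ereal (exp v) < conv_radius a"
proof (cases "conv_radius a")
  case (real r)
  with assms have r: "exp u < r" by simp
  hence "r > 0" using exp_gt_zero[of u] by linarith
  define v where "v = ln ((exp u + r) / 2)"
  have "exp v = (exp u + r)/2" unfolding v_def using \<open>r > 0\<close> by (simp add: add_pos_pos)
  have e1: "exp u < exp v" by (subst \<open>exp v = _\<close>) (use r in simp)
  have "exp v < r" using \<open>exp v = _\<close> r by simp
  moreover have "u < v" using e1 by simp
  ultimately show ?thesis using real by (intro exI[of _ v]) auto
next
  case PInf
  thus ?thesis by (intro exI[of _ "u+1"]) auto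
next
  case MInf
  thus ?thesis using conv_radius_nonneg[of a] by simp
qed

lemma summable_weighted:
  fixes a :: "nat \<Rightarrow> real"
  assumes "ereal (exp u) < conv_radius a" "C \<ge> 0"
  shows "summable (\<lambda>k. \<bar>a k\<bar> * (real k + C) ^ p * exp (real k * u))"
proof -
  obtain v where v: "v > u" "ereal (exp v) < conv_radius a"
    using exists_bigger_in_radius[OF assms(1)] by blast
  have sv: "summable (\<lambda>k. norm (a k * (exp v) ^ k))"
    using abs_summable_in_conv_radius[of "exp v" a] v(2) by simp
  have lim: "((\<lambda>k. (real k + C) ^ p * exp (real k * (u - v))) \<longlongrightarrow> 0) at_top"
    using v(1) by real_asymp
  hence ev: "eventually (\<lambda>k. (real k + C) ^ p * exp (real k * (u - v)) \<le> 1) at_top"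
    using order_tendstoD(2)[OF lim, of 1] by (auto elim: eventually_mono)
  show ?thesis
  proof (rule summable_comparison_test_ev[OF _ sv])
    show "eventually (\<lambda>k. norm (\<bar>a k\<bar> * (real k + C) ^ p * exp (real k * u)) \<le> norm (a k * (exp v) ^ k)) sequentially"
      using ev
    proof eventually_elim
      case (elim k)
      have eq: "exp (real k * u) = exp (real k * (u - v)) * exp v ^ k"
        by (simp add: exp_add[symmetric] exp_of_nat_mult[symmetric] algebra_simps)
      have "norm (\<bar>a k\<bar> * (real k + C) ^ p * exp (real k * u)) = \<bar>a k\<bar> * ((real k + C) ^ p * exp (real k * (u - v))) * exp v ^ k"
        using assms(2) by (simp add: eq abs_mult)
      also have "\<dots> \<le> \<bar>a k\<bar> * 1 * exp v ^ k"
        by (intro mult_right_mono mult_left_mono elim) auto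
      finally show ?case by (simp add: abs_mult)
    qed
  qed
qed

definition Phi :: "(nat \<Rightarrow> real) \<Rightarrow> real \<Rightarrow> nat \<Rightarrow> real \<Rightarrow> real" where
  "Phi a c j s = (\<Sum>k. a k * (real k - c) ^ j * exp ((real k - c) * s))"

lemma Phi_term_bound:
  assumes "\<bar>x\<bar> \<le> B" "x \<le> v"
  shows "\<bar>a k * (real k - c) ^ j * exp ((real k - c) * x)\<bar>
     \<le> \<bar>a k\<bar> * (real k + \<bar>c\<bar>) ^ j * exp (real k * v) * exp (\<bar>c\<bar> * B)"
proof -
  have "\<bar>real k - c\<bar> ^ j \<le> (real k + \<bar>c\<bar>) ^ j" by (intro power_mono) auto
  moreover have "exp ((real k - c) * x) \<le> exp (real k * v) * exp (\<bar>c\<bar> * B)"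
  proof -
    have "real k * x \<le> real k * v" using assms(2) by (intro mult_left_mono) auto
    moreover have "- c * x \<le> \<bar>c\<bar> * B"
    proof -
      have "- c * x \<le> \<bar>c\<bar> * \<bar>x\<bar>" by (metis abs_ge_minus_self abs_minus abs_mult mult_minus_left)
      also have "\<dots> \<le> \<bar>c\<bar> * B" using assms(1) by (intro mult_left_mono) auto
      finally show ?thesis .
    qed
    ultimately have "(real k - c) * x \<le> real k * v + \<bar>c\<bar> * B" by (simp add: algebra_simps)
    hence "exp ((real k - c) * x) \<le> exp (real k * v + \<bar>c\<bar> * B)" by simp
    thus ?thesis by (simp add: exp_add)
  qed
  ultimately show ?thesis
    by (simp add: abs_mult power_abs mult.assoc mult_left_mono mult_mono)
qed

lemma Phi_summable_abs:
  fixes a :: "nat \<Rightarrow> real"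
  assumes "ereal (exp s) < conv_radius a"
  shows "summable (\<lambda>k. \<bar>a k * (real k - c) ^ j * exp ((real k - c) * s)\<bar>)"
proof (rule summable_comparison_test)
  show "summable (\<lambda>k. \<bar>a k\<bar> * (real k + \<bar>c\<bar>) ^ j * exp (real k * s) * exp (\<bar>c\<bar> * \<bar>s\<bar>))"
    by (intro summable_mult2 summable_weighted assms) auto
  show "\<exists>N. \<forall>n\<ge>N. norm \<bar>a n * (real n - c) ^ j * exp ((real n - c) * s)\<bar>
      \<le> \<bar>a n\<bar> * (real n + \<bar>c\<bar>) ^ j * exp (real n * s) * exp (\<bar>c\<bar> * \<bar>s\<bar>)"
    using Phi_term_bound[of s "\<bar>s\<bar>" s] by auto
qed

lemma Phi_summable:
  fixes a :: "nat \<Rightarrow> real"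
  assumes "ereal (exp s) < conv_radius a"
  shows "summable (\<lambda>k. a k * (real k - c) ^ j * exp ((real k - c) * s))"
  using Phi_summable_abs[OF assms] by (rule summable_rabs_cancel)

lemma Phi_deriv:
  fixes a :: "nat \<Rightarrow> real"
  assumes "ereal (exp s) < conv_radius a"
  shows "(Phi a c j has_real_derivative Phi a c (Suc j) s) (at s)"
proof -
  obtain v where v: "v > s" "ereal (exp v) < conv_radius a"
    using exists_bigger_in_radius[OF assms] by blast
  define d where "d = v - s"
  have d: "d > 0" using v unfolding d_def by simp
  define T where "T = {s - d..s + d}"
  define f where "f = (\<lambda>n x. a n * (real n - c) ^ j * exp ((real n - c) * x))"
  define f' where "f' = (\<lambda>n x. a n * (real n - c) ^ Suc j * exp ((real n - c) * x))"
  have 1: "convex T" unfolding T_def by simp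
  have 2: "(f n has_field_derivative f' n x) (at x within T)" for n x
    unfolding f_def f'_def by (auto intro!: derivative_eq_intros simp: algebra_simps)
  have 3: "uniformly_convergent_on T (\<lambda>n x. \<Sum>i<n. f' i x)"
  proof (rule Weierstrass_m_test')
    fix n x assume "x \<in> T"
    hence "\<bar>x\<bar> \<le> \<bar>s\<bar> + d" "x \<le> v" unfolding T_def d_def by auto
    thus "norm (f' n x) \<le> \<bar>a n\<bar> * (real n + \<bar>c\<bar>) ^ Suc j * exp (real n * v) * exp (\<bar>c\<bar> * (\<bar>s\<bar> + d))"
      unfolding f'_def real_norm_def by (rule Phi_term_bound)
  next
    show "summable (\<lambda>n. \<bar>a n\<bar> * (real n + \<bar>c\<bar>) ^ Suc j * exp (real n * v) * exp (\<bar>c\<bar> * (\<bar>s\<bar> + d)))"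
      by (intro summable_mult2 summable_weighted v) auto
  qed
  have 4: "s \<in> T" unfolding T_def using d by auto
  have 5: "summable (\<lambda>n. f n s)" unfolding f_def by (rule Phi_summable[OF assms])
  have 6: "s \<in> interior T" unfolding T_def using d by auto
  from has_field_derivative_series'(2)[OF 1 2 3 4 5 6]
  show ?thesis unfolding f_def f'_def Phi_def[abs_def] by simp
qed

lemma Phi0_pos:
  fixes a :: "nat \<Rightarrow> real"
  assumes nonneg: "\<forall>k. a k \<ge> 0" and a0: "a 0 > 0" and s: "ereal (exp s) < conv_radius a"
  shows "Phi a c 0 s > 0"
  unfolding Phi_def
  by (rule suminf_pos2[where i=0]) (use Phi_summable[OF s, of c 0] nonneg a0 in auto)

lemma Phi2_pos:
  fixes a :: "nat \<Rightarrow> real"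
  assumes nonneg: "\<forall>k. a k \<ge> 0" and a0: "a 0 > 0" and nonconst: "\<exists>k>0. a k \<noteq> 0"
    and s: "ereal (exp s) < conv_radius a"
  shows "Phi a c 2 s > 0"
proof -
  have sm: "summable (\<lambda>k. a k * (real k - c) ^ 2 * exp ((real k - c) * s))"
    by (rule Phi_summable[OF s])
  have nn: "\<And>k. 0 \<le> a k * (real k - c) ^ 2 * exp ((real k - c) * s)"
    using nonneg by auto
  show ?thesis
  proof (cases "c = 0")
    case True
    from nonconst obtain k where k: "k > 0" "a k \<noteq> 0" by blast
    hence "a k > 0" using nonneg by (metis less_eq_real_def)
    hence "0 < a k * (real k - c) ^ 2 * exp ((real k - c) * s)" using k True by auto
    thus ?thesis unfolding Phi_def by (rule suminf_pos2[OF sm nn])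
  next
    case False
    hence "0 < a 0 * (real 0 - c) ^ 2 * exp ((real 0 - c) * s)" using a0 by auto
    thus ?thesis unfolding Phi_def by (rule suminf_pos2[OF sm nn])
  qed
qed

lemma ps_f_Phi: "ps_f a (exp s) = Phi a 0 0 s"
  unfolding ps_f_def Phi_def by (simp add: exp_of_nat_mult)

lemma Phi_c0:
  fixes a :: "nat \<Rightarrow> real"
  assumes s: "ereal (exp s) < conv_radius a"
  shows "Phi a c 0 s = exp (- c * s) * ps_f a (exp s)"
proof -
  have "summable (\<lambda>k. a k * (real k - 0) ^ 0 * exp ((real k - 0) * s))"
    by (rule Phi_summable[OF s])
  hence sm: "summable (\<lambda>k. a k * exp s ^ k)" by (simp add: exp_of_nat_mult)
  have "Phi a c 0 s = (\<Sum>k. exp (- c * s) * (a k * exp s ^ k))"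
    unfolding Phi_def by (intro suminf_cong) (simp add: exp_of_nat_mult[symmetric] exp_add[symmetric] algebra_simps)
  also have "\<dots> = exp (- c * s) * ps_f a (exp s)"
    unfolding ps_f_def by (rule suminf_mult[OF sm])
  finally show ?thesis .
qed

lemma moment_Phi:
  fixes a :: "nat \<Rightarrow> real"
  assumes nonneg: "\<forall>k. a k \<ge> 0" and a0: "a 0 > 0" and s: "ereal (exp s) < conv_radius a"
  shows "(\<lambda>k. (real k - c) ^ j * kh_prob a (exp s) k) sums (Phi a c j s / Phi a c 0 s)"
proof -
  have P: "ps_f a (exp s) > 0" using Phi0_pos[OF nonneg a0 s, of 0] ps_f_Phi[of a s] by simp
  have eq: "(real k - c) ^ j * kh_prob a (exp s) k
      = a k * (real k - c) ^ j * exp ((real k - c) * s) / Phi a c 0 s" for k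
  proof -
    have "exp ((real k - c) * s) = exp s ^ k * exp (- c * s)"
      by (simp add: exp_of_nat_mult[symmetric] exp_add[symmetric] algebra_simps)
    thus ?thesis unfolding kh_prob_def Phi_c0[OF s] using P by (simp add: field_simps)
  qed
  have "(\<lambda>k. a k * (real k - c) ^ j * exp ((real k - c) * s)) sums Phi a c j s"
    unfolding Phi_def using Phi_summable[OF s] by (rule summable_sums)
  hence "(\<lambda>k. a k * (real k - c) ^ j * exp ((real k - c) * s) / Phi a c 0 s) sums (Phi a c j s / Phi a c 0 s)"
    by (rule sums_divide)
  thus ?thesis by (simp add: eq)
qed


lemma leibniz_sum_identity:
  fixes u v :: "nat \<Rightarrow> real"
  shows "(\<Sum>k\<le>n. real (n choose k) * (u (Suc k) * v (n - k) + u k * v (Suc (n - k))))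
       = (\<Sum>k\<le>Suc n. real (Suc n choose k) * u k * v (Suc n - k))"
proof -
  have A: "(\<Sum>k\<le>n. real (n choose k) * (u k * v (Suc (n - k))))
        = u 0 * v (Suc n) + (\<Sum>k<n. real (n choose Suc k) * u (Suc k) * v (n - k))"
    by (subst sum.atMost_shift) (auto simp: Suc_diff_Suc mult.assoc intro!: sum.cong)
  have B: "(\<Sum>k\<le>n. real (n choose Suc k) * u (Suc k) * v (n - k))
        = (\<Sum>k<n. real (n choose Suc k) * u (Suc k) * v (n - k))"
    by (simp add: lessThan_Suc_atMost[symmetric])
  have "(\<Sum>k\<le>Suc n. real (Suc n choose k) * u k * v (Suc n - k))
      = u 0 * v (Suc n) + (\<Sum>k\<le>n. real (Suc n choose Suc k) * u (Suc k) * v (n - k))"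
    by (subst sum.atMost_Suc_shift) simp
  also have "\<dots> = u 0 * v (Suc n) + (\<Sum>k\<le>n. real (n choose k) * u (Suc k) * v (n - k))
        + (\<Sum>k\<le>n. real (n choose Suc k) * u (Suc k) * v (n - k))"
    by (simp add: sum.distrib algebra_simps)
  finally show ?thesis using A B by (simp add: sum.distrib algebra_simps)
qed

lemma leibniz_deriv:
  fixes U V :: "nat \<Rightarrow> real \<Rightarrow> real"
  assumes U: "\<And>i. i \<le> n \<Longrightarrow> (U i has_real_derivative U (Suc i) s) (at s)"
    and V: "\<And>i. i \<le> n \<Longrightarrow> (V i has_real_derivative V (Suc i) s) (at s)"
  shows "((\<lambda>x. \<Sum>k\<le>n. real (n choose k) * U k x * V (n - k) x) has_real_derivative
          (\<Sum>k\<le>Suc n. real (Suc n choose k) * U k s * V (Suc n - k) s)) (at s)"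
proof -
  have "((\<lambda>x. \<Sum>k\<le>n. real (n choose k) * U k x * V (n - k) x) has_real_derivative
          (\<Sum>k\<le>n. real (n choose k) * (U (Suc k) s * V (n - k) s + U k s * V (Suc (n - k)) s))) (at s)"
  proof (rule DERIV_sum)
    fix k assume k: "k \<in> {..n}"
    have "((\<lambda>x. U k x * V (n - k) x) has_real_derivative
           (U (Suc k) s * V (n - k) s + U k s * V (Suc (n - k)) s)) (at s)"
      using DERIV_mult[OF U[of k] V[of "n - k"]] k by (simp add: mult.commute)
    from DERIV_cmult[OF this, of "real (n choose k)"]
    show "((\<lambda>x. real (n choose k) * U k x * V (n - k) x) has_real_derivative
           real (n choose k) * (U (Suc k) s * V (n - k) s + U k s * V (Suc (n - k)) s)) (at s)"
      by (simp add: mult.assoc)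
  qed
  thus ?thesis by (simp only: leibniz_sum_identity[of n "\<lambda>k. U k s" "\<lambda>k. V k s"])
qed

lemma log_smooth:
  fixes \<Phi> :: "nat \<Rightarrow> real \<Rightarrow> real" and S :: "real set"
  assumes S: "open S"
    and d\<Phi>: "\<And>j s. s \<in> S \<Longrightarrow> (\<Phi> j has_real_derivative \<Phi> (Suc j) s) (at s)"
    and pos: "\<And>s. s \<in> S \<Longrightarrow> \<Phi> 0 s > 0"
  shows "\<And>j s. s \<in> S \<Longrightarrow> ((deriv ^^ j) (\<lambda>x. ln (\<Phi> 0 x)) has_real_derivative
                 (deriv ^^ Suc j) (\<lambda>x. ln (\<Phi> 0 x)) s) (at s)"
    and "\<And>j s. s \<in> S \<Longrightarrow> \<Phi> (Suc j) s =
          (\<Sum>i\<le>j. real (j choose i) * (deriv ^^ Suc i) (\<lambda>x. ln (\<Phi> 0 x)) s * \<Phi> (j - i) s)"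
proof -
  define D where "D = (\<lambda>i. (deriv ^^ i) (\<lambda>x. ln (\<Phi> 0 x)))"
  have DSuc: "D (Suc i) = deriv (D i)" for i unfolding D_def by simp
  define W where "W = (\<lambda>i s. \<Sum>k\<le>i. real (i choose k) * D (Suc k) s * \<Phi> (i - k) s)"
  define Q where "Q = (\<lambda>j. \<forall>i\<le>j. \<forall>s\<in>S. (D i has_real_derivative D (Suc i) s) (at s))"
  have diffQ: "(D i has_real_derivative D (Suc i) s) (at s)" if "D i differentiable at s" for i s
    using that unfolding DSuc by (simp add: DERIV_deriv_iff_real_differentiable)
  have D0: "(D 0 has_real_derivative \<Phi> 1 s / \<Phi> 0 s) (at s)" if "s \<in> S" for s
  proof -
    have "((\<lambda>x. ln (\<Phi> 0 x)) has_real_derivative inverse (\<Phi> 0 s) * \<Phi> (Suc 0) s) (at s)"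
      by (rule DERIV_chain2[OF DERIV_ln[OF pos[OF that]] d\<Phi>[OF that, of 0]])
    thus ?thesis unfolding D_def by (simp add: divide_inverse mult.commute)
  qed
  have Q0: "Q 0" unfolding Q_def
  proof (intro allI impI ballI)
    fix i s assume "i \<le> (0::nat)" "s \<in> S"
    hence "i = 0" by simp
    have "D 0 differentiable at s" using D0[OF \<open>s \<in> S\<close>] real_differentiable_def by blast
    thus "(D i has_real_derivative D (Suc i) s) (at s)" using \<open>i = 0\<close> diffQ by simp
  qed
  have Leib: "\<forall>s\<in>S. \<Phi> (Suc i) s = W i s" if "Q j" "i \<le> j" for i j
    using that(2)
  proof (induction i)
    case 0
    show ?case
    proof
      fix s assume s: "s \<in> S"
      have "(D 0 has_real_derivative D 1 s) (at s)" using \<open>Q j\<close> s unfolding Q_def by auto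
      with D0[OF s] have "D 1 s = \<Phi> 1 s / \<Phi> 0 s" using DERIV_unique by blast
      thus "\<Phi> (Suc 0) s = W 0 s" unfolding W_def using pos[OF s] by simp
    qed
  next
    case (Suc i)
    show ?case
    proof
      fix s assume s: "s \<in> S"
      have IH: "\<forall>s\<in>S. \<Phi> (Suc i) s = W i s" using Suc by simp
      have "(W i has_real_derivative W (Suc i) s) (at s)"
        unfolding W_def
      proof (rule leibniz_deriv[of i "\<lambda>k. D (Suc k)" s \<Phi>])
        fix k assume "k \<le> i"
        hence "Suc k \<le> j" using Suc.prems by simp
        thus "(D (Suc k) has_real_derivative D (Suc (Suc k)) s) (at s)"
          using \<open>Q j\<close> s unfolding Q_def by blast
      next
        fix k show "(\<Phi> k has_real_derivative \<Phi> (Suc k) s) (at s)" by (rule d\<Phi>[OF s])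
      qed
      moreover have "(W i has_real_derivative \<Phi> (Suc (Suc i)) s) (at s)"
        by (rule has_field_derivative_transform_within_open[OF d\<Phi>[OF s] S s]) (use IH in simp)
      ultimately show "\<Phi> (Suc (Suc i)) s = W (Suc i) s" using DERIV_unique by blast
    qed
  qed
  have QSuc: "Q (Suc j)" if "Q j" for j
  proof -
    have "(D (Suc j) has_real_derivative D (Suc (Suc j)) s) (at s)" if s: "s \<in> S" for s
    proof -
      define G where "G = (\<lambda>x. (\<Phi> (Suc j) x - (\<Sum>k<j. real (j choose k) * D (Suc k) x * \<Phi> (j - k) x)) / \<Phi> 0 x)"
      have eqG: "D (Suc j) x = G x" if x: "x \<in> S" for x
      proof -
        have "\<Phi> (Suc j) x = W j x" using Leib[OF \<open>Q j\<close> order.refl] x by blast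
        also have "W j x = D (Suc j) x * \<Phi> 0 x + (\<Sum>k<j. real (j choose k) * D (Suc k) x * \<Phi> (j - k) x)"
          unfolding W_def by (simp add: lessThan_Suc_atMost[symmetric])
        finally show ?thesis unfolding G_def using pos[OF x] by (simp add: field_simps)
      qed
      have dphi: "\<Phi> i differentiable at s" for i using d\<Phi>[OF s] real_differentiable_def by blast
      have "G differentiable at s"
        unfolding G_def
      proof (intro differentiable_divide differentiable_diff differentiable_sum differentiable_mult ballI differentiable_const)
        show "D (Suc k) differentiable at s" if "k \<in> {..<j}" for k
        proof -
          have "Suc k \<le> j" using that by simp
          hence "(D (Suc k) has_real_derivative D (Suc (Suc k)) s) (at s)"
            using \<open>Q j\<close> s unfolding Q_def by blast
          thus ?thesis unfolding real_differentiable_def by blast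
        qed
        show "\<Phi> 0 s \<noteq> 0" using pos[OF s] by simp
      qed (auto intro: dphi)
      then obtain G' where "(G has_real_derivative G') (at s)" using real_differentiable_def by blast
      hence "(D (Suc j) has_real_derivative G') (at s)"
        by (rule has_field_derivative_transform_within_open[OF _ S s]) (use eqG in simp)
      hence "D (Suc j) differentiable at s" using real_differentiable_def by blast
      thus ?thesis by (rule diffQ)
    qed
    thus ?thesis using \<open>Q j\<close> unfolding Q_def by (auto simp: le_Suc_eq)
  qed
  have Qall: "Q j" for j by (induction j) (use Q0 QSuc in auto)
  show "\<And>j s. s \<in> S \<Longrightarrow> ((deriv ^^ j) (\<lambda>x. ln (\<Phi> 0 x)) has_real_derivative
                 (deriv ^^ Suc j) (\<lambda>x. ln (\<Phi> 0 x)) s) (at s)"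
    using Qall unfolding Q_def D_def by blast
  show "\<And>j s. s \<in> S \<Longrightarrow> \<Phi> (Suc j) s =
          (\<Sum>i\<le>j. real (j choose i) * (deriv ^^ Suc i) (\<lambda>x. ln (\<Phi> 0 x)) s * \<Phi> (j - i) s)"
    using Leib[OF Qall order.refl] unfolding W_def D_def by blast
qed

lemma fam_deriv:
  fixes E :: "nat \<Rightarrow> real \<Rightarrow> real" and S :: "real set"
  assumes S: "open S"
    and dE: "\<And>j s. s \<in> S \<Longrightarrow> (E j has_real_derivative E (Suc j) s) (at s)"
    and H: "\<And>s. s \<in> S \<Longrightarrow> H s = E 0 s"
  shows "s \<in> S \<Longrightarrow> (deriv ^^ i) H s = E i s"
proof (induction i arbitrary: s)
  case 0 thus ?case using H by simp
next
  case (Suc i)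
  have "((deriv ^^ i) H has_real_derivative E (Suc i) s) (at s)"
    by (rule has_field_derivative_transform_within_open[OF dE[OF Suc.prems] S Suc.prems]) (use Suc.IH in simp)
  thus ?case by (simp add: DERIV_imp_deriv)
qed


lemma cs_sum_identity:
  fixes \<nu> :: "nat \<Rightarrow> real"
  assumes \<nu>1: "\<nu> 1 = 0" and \<nu>S: "\<And>j. \<nu> (Suc (Suc j)) = real (Suc j) * \<nu> j"
  shows "(\<Sum>i\<le>j. real (j choose i) * (if Suc i = 2 then 1 else 0) * \<nu> (j - i)) = \<nu> (Suc j)"
proof -
  have "(\<Sum>i\<le>j. real (j choose i) * (if Suc i = 2 then 1 else 0) * \<nu> (j - i))
      = (\<Sum>i\<le>j. if i = 1 then real (j choose 1) * \<nu> (j - 1) else 0)"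
    by (intro sum.cong) auto
  also have "\<dots> = (if 1 \<le> j then real j * \<nu> (j - 1) else 0)"
    by (subst sum.delta) auto
  also have "\<dots> = \<nu> (Suc j)"
    using \<nu>1 by (cases j) (auto simp: \<nu>S)
  finally show ?thesis .
qed

lemma moment_cumulant_limits:
  fixes \<mu> c :: "'x \<Rightarrow> nat \<Rightarrow> real" and \<nu> :: "nat \<Rightarrow> real" and F :: "'x filter"
  assumes ev: "eventually (\<lambda>x. \<mu> x 0 = 1 \<and> c x 1 = 0 \<and> c x 2 = 1 \<and>
      (\<forall>j. \<mu> x (Suc j) = (\<Sum>i\<le>j. real (j choose i) * c x (Suc i) * \<mu> x (j - i)))) F"
    and \<nu>0: "\<nu> 0 = 1" and \<nu>1: "\<nu> 1 = 0" and \<nu>S: "\<And>j. \<nu> (Suc (Suc j)) = real (Suc j) * \<nu> j"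
  shows "(\<forall>j\<in>{3..n}. ((\<lambda>x. \<mu> x j) \<longlongrightarrow> \<nu> j) F) \<longleftrightarrow> (\<forall>j\<in>{3..n}. ((\<lambda>x. c x j) \<longlongrightarrow> 0) F)"
proof -
  define cs :: "nat \<Rightarrow> real" where "cs i = (if i = 2 then 1 else 0)" for i
  have ident: "(\<Sum>i\<le>j. real (j choose i) * cs (Suc i) * \<nu> (j - i)) = \<nu> (Suc j)" for j
    unfolding cs_def by (rule cs_sum_identity[OF \<nu>1 \<nu>S])
  have rec: "eventually (\<lambda>x. \<mu> x (Suc j) = (\<Sum>i\<le>j. real (j choose i) * c x (Suc i) * \<mu> x (j - i))) F" for j
    using ev by (rule eventually_mono) blast
  have c1: "((\<lambda>x. c x 1) \<longlongrightarrow> cs 1) F"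
    unfolding cs_def by (rule tendsto_eventually) (use ev in \<open>auto elim: eventually_mono\<close>)
  have c2: "((\<lambda>x. c x 2) \<longlongrightarrow> cs 2) F"
    unfolding cs_def by (rule tendsto_eventually) (use ev in \<open>auto elim: eventually_mono\<close>)
  have m0: "((\<lambda>x. \<mu> x 0) \<longlongrightarrow> \<nu> 0) F"
    unfolding \<nu>0 by (rule tendsto_eventually) (use ev in \<open>auto elim: eventually_mono\<close>)
  show ?thesis
  proof
    assume H: "\<forall>j\<in>{3..n}. ((\<lambda>x. \<mu> x j) \<longlongrightarrow> \<nu> j) F"
    have m1: "((\<lambda>x. \<mu> x 1) \<longlongrightarrow> \<nu> 1) F"
      unfolding \<nu>1 by (rule tendsto_eventually) (use ev in \<open>auto elim: eventually_mono\<close>)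
    have "\<nu> 2 = 1" using \<nu>S[of 0] \<nu>0 by (simp add: numeral_2_eq_2)
    have m2: "((\<lambda>x. \<mu> x 2) \<longlongrightarrow> \<nu> 2) F"
      unfolding \<open>\<nu> 2 = 1\<close>
    proof (rule tendsto_eventually)
      show "eventually (\<lambda>x. \<mu> x 2 = 1) F"
        using ev
      proof (rule eventually_mono)
        fix x assume A: "\<mu> x 0 = 1 \<and> c x 1 = 0 \<and> c x 2 = 1 \<and>
          (\<forall>j. \<mu> x (Suc j) = (\<Sum>i\<le>j. real (j choose i) * c x (Suc i) * \<mu> x (j - i)))"
        hence "\<mu> x (Suc 1) = (\<Sum>i\<le>1. real (1 choose i) * c x (Suc i) * \<mu> x (1 - i))" by blast
        thus "\<mu> x 2 = 1" using A by (simp add: numeral_2_eq_2)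
      qed
    qed
    have Hm: "((\<lambda>x. \<mu> x j) \<longlongrightarrow> \<nu> j) F" if hj: "j \<le> n" for j
    proof -
      consider "j = 0" | "j = 1" | "j = 2" | "j \<ge> 3" by linarith
      thus ?thesis using m0 m1 m2 H hj by cases auto
    qed
    have Hc: "((\<lambda>x. c x i) \<longlongrightarrow> cs i) F" if "1 \<le> i" "i \<le> n" for i
      using that
    proof (induction i rule: less_induct)
      case (less i)
      consider "i = 1" | "i = 2" | "i \<ge> 3" using less.prems by linarith
      thus ?case
      proof cases
        case 1 thus ?thesis using c1 by simp
      next
        case 2 thus ?thesis using c2 by simp
      next
        case 3
        then obtain j where j: "i = Suc j" "j \<ge> 2" by (metis Suc_le_D Suc_le_mono numeral_3_eq_3 numeral_2_eq_2)
        have evc: "eventually (\<lambda>x. \<mu> x (Suc j) - (\<Sum>i<j. real (j choose i) * c x (Suc i) * \<mu> x (j - i)) = c x (Suc j)) F"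
          using ev
        proof (rule eventually_mono)
          fix x assume A: "\<mu> x 0 = 1 \<and> c x 1 = 0 \<and> c x 2 = 1 \<and>
            (\<forall>j. \<mu> x (Suc j) = (\<Sum>i\<le>j. real (j choose i) * c x (Suc i) * \<mu> x (j - i)))"
          hence "\<mu> x (Suc j) = (\<Sum>i\<le>j. real (j choose i) * c x (Suc i) * \<mu> x (j - i))" by blast
          also have "\<dots> = (\<Sum>i<j. real (j choose i) * c x (Suc i) * \<mu> x (j - i)) + c x (Suc j)"
            using A by (simp add: lessThan_Suc_atMost[symmetric])
          finally show "\<mu> x (Suc j) - (\<Sum>i<j. real (j choose i) * c x (Suc i) * \<mu> x (j - i)) = c x (Suc j)"
            by simp
        qed
        have lim: "((\<lambda>x. \<mu> x (Suc j) - (\<Sum>i<j. real (j choose i) * c x (Suc i) * \<mu> x (j - i)))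
             \<longlongrightarrow> \<nu> (Suc j) - (\<Sum>i<j. real (j choose i) * cs (Suc i) * \<nu> (j - i))) F"
        proof (intro tendsto_diff tendsto_sum tendsto_mult tendsto_const)
          show "((\<lambda>x. \<mu> x (Suc j)) \<longlongrightarrow> \<nu> (Suc j)) F" using Hm less.prems j by simp
          fix k assume "k \<in> {..<j}"
          thus "((\<lambda>x. c x (Suc k)) \<longlongrightarrow> cs (Suc k)) F" using less.IH[of "Suc k"] less.prems j by simp
          show "((\<lambda>x. \<mu> x (j - k)) \<longlongrightarrow> \<nu> (j - k)) F" using Hm less.prems j by simp
        qed
        have "(\<Sum>i<j. real (j choose i) * cs (Suc i) * \<nu> (j - i)) = \<nu> (Suc j)"
          using ident[of j] j by (simp add: lessThan_Suc_atMost[symmetric] cs_def)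
        with lim have "((\<lambda>x. \<mu> x (Suc j) - (\<Sum>i<j. real (j choose i) * c x (Suc i) * \<mu> x (j - i))) \<longlongrightarrow> cs i) F"
          using j by (simp add: cs_def)
        from Lim_transform_eventually[OF this evc] show ?thesis using j by simp
      qed
    qed
    show "\<forall>j\<in>{3..n}. ((\<lambda>x. c x j) \<longlongrightarrow> 0) F"
    proof
      fix j assume "j \<in> {3..n}"
      hence "1 \<le> j" "j \<le> n" "j \<noteq> 2" by auto
      thus "((\<lambda>x. c x j) \<longlongrightarrow> 0) F" using Hc[of j] by (simp add: cs_def)
    qed
  next
    assume H: "\<forall>j\<in>{3..n}. ((\<lambda>x. c x j) \<longlongrightarrow> 0) F"
    have Hc: "((\<lambda>x. c x i) \<longlongrightarrow> cs i) F" if hi: "1 \<le> i" "i \<le> n" for i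
    proof -
      consider "i = 1" | "i = 2" | "i \<ge> 3" using hi by linarith
      thus ?thesis using c1 c2 H hi by cases (auto simp: cs_def)
    qed
    have "\<forall>m\<le>j. ((\<lambda>x. \<mu> x m) \<longlongrightarrow> \<nu> m) F" if "j \<le> n" for j
      using that
    proof (induction j)
      case 0 thus ?case using m0 by simp
    next
      case (Suc j)
      have "((\<lambda>x. \<Sum>i\<le>j. real (j choose i) * c x (Suc i) * \<mu> x (j - i))
             \<longlongrightarrow> (\<Sum>i\<le>j. real (j choose i) * cs (Suc i) * \<nu> (j - i))) F"
      proof (intro tendsto_sum tendsto_mult tendsto_const)
        fix k assume "k \<in> {..j}"
        thus "((\<lambda>x. c x (Suc k)) \<longlongrightarrow> cs (Suc k)) F" using Hc[of "Suc k"] Suc.prems by simp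
        show "((\<lambda>x. \<mu> x (j - k)) \<longlongrightarrow> \<nu> (j - k)) F" using Suc.IH Suc.prems by simp
      qed
      hence "((\<lambda>x. \<Sum>i\<le>j. real (j choose i) * c x (Suc i) * \<mu> x (j - i)) \<longlongrightarrow> \<nu> (Suc j)) F"
        by (simp only: ident)
      hence "((\<lambda>x. \<mu> x (Suc j)) \<longlongrightarrow> \<nu> (Suc j)) F"
        by (rule Lim_transform_eventually) (use rec[of j] in \<open>auto elim: eventually_mono\<close>)
      thus ?case using Suc by (auto simp: le_Suc_eq)
    qed
    thus "\<forall>j\<in>{3..n}. ((\<lambda>x. \<mu> x j) \<longlongrightarrow> \<nu> j) F" by auto
  qed
qed


lemma nu0: "std_normal_moment 0 = 1"
  using integral_std_normal_moment_even[of 0] unfolding std_normal_moment_def by simp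

lemma nu1: "std_normal_moment 1 = 0"
  using integral_std_normal_moment_odd[of 0] unfolding std_normal_moment_def by simp

lemma nuS: "std_normal_moment (Suc (Suc j)) = real (Suc j) * std_normal_moment j"
proof (cases "even j")
  case True
  then obtain k where k: "j = 2 * k" by blast
  have "std_normal_moment (Suc (Suc j)) = fact (2 * Suc k) / (2 ^ Suc k * fact (Suc k))"
    using integral_std_normal_moment_even[of "Suc k"] unfolding std_normal_moment_def k by simp
  also have "\<dots> = real (Suc j) * (fact (2 * k) / (2 ^ k * fact k))"
  proof -
    have h1: "(fact (2 * Suc k) :: real) = (2 * real k + 2) * (2 * real k + 1) * fact (2 * k)"
      by (simp add: fact_Suc algebra_simps)
    have h2: "(fact (Suc k) :: real) = (real k + 1) * fact k" by (simp add: fact_Suc)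
    have nz: "(fact k :: real) \<noteq> 0" "real k + 1 \<noteq> 0" "(2::real) ^ k \<noteq> 0" by simp_all
    have "(2 * real k + 2) * (2 * real k + 1) * fact (2 * k) / (2 ^ Suc k * ((real k + 1) * fact k))
        = (2 * real k + 1) * (fact (2 * k) / (2 ^ k * fact k))"
      using nz by (simp add: divide_simps)
    thus ?thesis unfolding h1 h2 k by simp
  qed
  also have "\<dots> = real (Suc j) * std_normal_moment j"
    using integral_std_normal_moment_even[of k] unfolding std_normal_moment_def k by simp
  finally show ?thesis .
next
  case False
  then obtain k where k: "j = 2 * k + 1" using oddE by blast
  have "std_normal_moment (Suc (Suc j)) = 0"
    using integral_std_normal_moment_odd[of "Suc k"] unfolding std_normal_moment_def k by simp
  moreover have "std_normal_moment j = 0"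
    using integral_std_normal_moment_odd[of k] unfolding std_normal_moment_def k by simp
  ultimately show ?thesis by simp
qed

lemma lnexp: "s < ln r \<Longrightarrow> r > 0 \<Longrightarrow> exp s < (r::real)"
  by (metis exp_less_cancel_iff exp_ln)

lemma open_S: "open {s. ereal (exp s) < conv_radius a}"
proof (cases "conv_radius a")
  case (real r)
  hence "{s. ereal (exp s) < conv_radius a} = {s. exp s < r}" by auto
  thus ?thesis by (auto intro!: open_Collect_less continuous_intros)
qed auto

lemma eventually_S:
  assumes "conv_radius a > 0"
  shows "eventually (\<lambda>s. ereal (exp s) < conv_radius a) (log_radius_filter a)"
proof (cases "conv_radius a")
  case (real r)
  with assms have r: "r > 0" by simp
  have "eventually (\<lambda>s. s \<in> {ln r - 1<..<ln r}) (at_left (ln r))"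
    by (rule eventually_at_left_real) simp
  hence "eventually (\<lambda>s. exp s < r) (at_left (ln r))"
    by (rule eventually_mono) (use r in \<open>auto dest: lnexp\<close>)
  thus ?thesis unfolding log_radius_filter_def using real by simp
qed (use assms in \<open>auto simp: log_radius_filter_def\<close>)

lemma filter_transfer:
  assumes "conv_radius a > 0"
  shows "(g \<longlongrightarrow> L) (radius_filter a) \<longleftrightarrow> ((\<lambda>s. g (exp s)) \<longlongrightarrow> L) (log_radius_filter a)"
proof -
  have "filterlim exp (radius_filter a) (log_radius_filter a) \<and> filterlim ln (log_radius_filter a) (radius_filter a)
        \<and> eventually (\<lambda>t. t > 0) (radius_filter a)"
  proof (cases "conv_radius a")
    case (real r)
    with assms have r: "r > 0" by simp
    have RF: "radius_filter a = at_left r" and LF: "log_radius_filter a = at_left (ln r)"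
      unfolding radius_filter_def log_radius_filter_def using real by auto
    have ev1: "eventually (\<lambda>t. t \<in> {r/2<..<r}) (at_left r)"
      by (rule eventually_at_left_real) (use r in simp)
    have ev2: "eventually (\<lambda>s. s \<in> {ln r - 1<..<ln r}) (at_left (ln r))"
      by (rule eventually_at_left_real) simp
    have "filterlim exp (at_left r) (at_left (ln r))"
      unfolding filterlim_at
    proof
      show "eventually (\<lambda>x. exp x \<in> {..<r} \<and> exp x \<noteq> r) (at_left (ln r))"
        using ev2 by (rule eventually_mono) (use r in \<open>auto dest: lnexp\<close>)
      have "(exp \<longlongrightarrow> exp (ln r)) (at_left (ln r))"
        by (intro tendsto_intros tendsto_ident_at)
      thus "(exp \<longlongrightarrow> r) (at_left (ln r))" using r by simp
    qed
    moreover have "filterlim ln (at_left (ln r)) (at_left r)"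
      unfolding filterlim_at
    proof
      show "eventually (\<lambda>x. ln x \<in> {..<ln r} \<and> ln x \<noteq> ln r) (at_left r)"
        using ev1 by (rule eventually_mono) (use r in auto)
      have "(ln \<longlongrightarrow> ln r) (at_left r)"
        using r by (intro tendsto_intros tendsto_ident_at) auto
      thus "(ln \<longlongrightarrow> ln r) (at_left r)" .
    qed
    moreover have "eventually (\<lambda>t. t > 0) (at_left r)"
      using ev1 by (rule eventually_mono) (use r in auto)
    ultimately show ?thesis unfolding RF LF by blast
  next
    case PInf
    hence RF: "radius_filter a = at_top" and LF: "log_radius_filter a = at_top"
      unfolding radius_filter_def log_radius_filter_def by auto
    show ?thesis unfolding RF LF
      by (auto simp: exp_at_top ln_at_top eventually_gt_at_top)
  qed (use assms in auto)
  hence f1: "filterlim exp (radius_filter a) (log_radius_filter a)"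
    and f2: "filterlim ln (log_radius_filter a) (radius_filter a)"
    and f3: "eventually (\<lambda>t. t > 0) (radius_filter a)" by blast+
  show ?thesis
  proof
    assume "(g \<longlongrightarrow> L) (radius_filter a)"
    from filterlim_compose[OF this f1] show "((\<lambda>s. g (exp s)) \<longlongrightarrow> L) (log_radius_filter a)" by (simp add: o_def)
  next
    assume "((\<lambda>s. g (exp s)) \<longlongrightarrow> L) (log_radius_filter a)"
    from filterlim_compose[OF this f2] have "((\<lambda>t. g (exp (ln t))) \<longlongrightarrow> L) (radius_filter a)" by (simp add: o_def)
    thus "(g \<longlongrightarrow> L) (radius_filter a)"
      by (rule Lim_transform_eventually) (use f3 in \<open>auto elim: eventually_mono\<close>)
  qed
qed


lemma fulcrum_Phi: "fulcrum a = (\<lambda>x. ln (Phi a 0 0 x))"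
  by (rule ext) (simp add: fulcrum_def ps_f_Phi)

lemma pointwise:
  fixes a :: "nat \<Rightarrow> real"
  assumes nonneg: "\<forall>k. a k \<ge> 0" and a0: "a 0 > 0" and nonconst: "\<exists>k>0. a k \<noteq> 0"
    and s: "ereal (exp s) < conv_radius a"
  defines "D \<equiv> \<lambda>i. (deriv ^^ i) (fulcrum a)"
  shows "D 2 s > 0"
    and "kh_norm_moment a 0 (exp s) = 1"
    and "\<And>j. kh_norm_moment a (Suc j) (exp s) = (\<Sum>i\<le>j. real (j choose i) *
            (if Suc i = 1 then 0 else D (Suc i) s / sqrt (D 2 s) ^ Suc i) * kh_norm_moment a (j - i) (exp s))"
proof -
  define S where "S = {s. ereal (exp s) < conv_radius a}"
  have S: "open S" unfolding S_def by (rule open_S)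
  have sS: "s \<in> S" using s unfolding S_def by simp
  have smooth: "\<And>j x. x \<in> S \<Longrightarrow> ((deriv ^^ j) (\<lambda>x. ln (Phi a c 0 x)) has_real_derivative
                 (deriv ^^ Suc j) (\<lambda>x. ln (Phi a c 0 x)) x) (at x)"
    and leib: "\<And>j x. x \<in> S \<Longrightarrow> Phi a c (Suc j) x =
          (\<Sum>i\<le>j. real (j choose i) * (deriv ^^ Suc i) (\<lambda>x. ln (Phi a c 0 x)) x * Phi a c (j - i) x)"
    for c
    using log_smooth[of S "Phi a c", OF S] Phi_deriv Phi0_pos[OF nonneg a0] unfolding S_def by blast+
  have Dfun: "D i = (deriv ^^ i) (\<lambda>x. ln (Phi a 0 0 x))" for i
    unfolding D_def fulcrum_Phi ..
  define c where "c = D 1 s"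
  define Dc where "Dc = (\<lambda>i. (deriv ^^ i) (\<lambda>x. ln (Phi a c 0 x)))"
  define E where "E = (\<lambda>i. if i = 0 then (\<lambda>x. D 0 x - c * x) else if i = 1 then (\<lambda>x. D 1 x - c) else D i)"
  have dD: "\<And>j x. x \<in> S \<Longrightarrow> (D j has_real_derivative D (Suc j) x) (at x)"
    unfolding Dfun by (rule smooth)
  have dE: "(E j has_real_derivative E (Suc j) x) (at x)" if x: "x \<in> S" for j x
  proof -
    consider "j = 0" | "j = 1" | "j \<ge> 2" by linarith
    thus ?thesis
    proof cases
      case 1
      have "((\<lambda>x. D 0 x - c * x) has_real_derivative D (Suc 0) x - c * 1) (at x)"
        by (intro DERIV_diff DERIV_cmult dD[OF x] DERIV_ident)
      thus ?thesis using 1 unfolding E_def by simp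
    next
      case 2
      have "((\<lambda>x. D 1 x - c) has_real_derivative D (Suc 1) x - 0) (at x)"
        by (intro DERIV_diff dD[OF x] DERIV_const)
      thus ?thesis using 2 unfolding E_def by (simp add: numeral_2_eq_2)
    next
      case 3
      thus ?thesis using dD[OF x, of j] unfolding E_def by simp
    qed
  qed
  have H: "ln (Phi a c 0 x) = E 0 x" if x: "x \<in> S" for x
  proof -
    have x': "ereal (exp x) < conv_radius a" using x unfolding S_def by simp
    have pos: "Phi a 0 0 x > 0" by (rule Phi0_pos[OF nonneg a0 x'])
    have "Phi a c 0 x = exp (- c * x) * Phi a 0 0 x" using Phi_c0[OF x', of c] ps_f_Phi[of a x] by simp
    hence "ln (Phi a c 0 x) = - c * x + ln (Phi a 0 0 x)" using pos by (simp add: ln_mult)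
    thus ?thesis unfolding E_def Dfun by simp
  qed
  have DcE: "Dc i s = E i s" for i
    unfolding Dc_def by (rule fam_deriv[OF S dE H sS])
  have Dc1: "Dc 1 s = 0" using DcE[of 1] unfolding E_def c_def by simp
  have DcS: "Dc (Suc i) s = (if Suc i = 1 then 0 else D (Suc i) s)" for i
    using DcE[of "Suc i"] Dc1 unfolding E_def by auto
  define P0 where "P0 = Phi a c 0 s"
  have P0: "P0 > 0" unfolding P0_def by (rule Phi0_pos[OF nonneg a0 s])
  have leibc: "Phi a c (Suc j) s = (\<Sum>i\<le>j. real (j choose i) * Dc (Suc i) s * Phi a c (j - i) s)" for j
    unfolding Dc_def by (rule leib[OF sS])
  have Phi1: "Phi a c 1 s = 0" using leibc[of 0] Dc1 by simp
  have Phi2: "Phi a c 2 s = D 2 s * P0"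
    using leibc[of 1] Dc1 Phi1 DcS[of 1] unfolding P0_def by (simp add: numeral_2_eq_2)
  show D2: "D 2 s > 0"
    using Phi2_pos[OF nonneg a0 nonconst s, of c] P0 Phi2 by (simp add: zero_less_mult_iff)
  have mean: "kh_mean a (exp s) = c"
  proof -
    have "(\<lambda>k. (real k - 0) ^ 1 * kh_prob a (exp s) k) sums (Phi a 0 1 s / Phi a 0 0 s)"
      by (rule moment_Phi[OF nonneg a0 s])
    hence "kh_mean a (exp s) = Phi a 0 1 s / Phi a 0 0 s"
      unfolding kh_mean_def by (simp add: sums_iff)
    also have "Phi a 0 1 s = D 1 s * Phi a 0 0 s"
      using leib[OF sS, of 0 0] unfolding Dfun by simp
    finally show ?thesis unfolding c_def using Phi0_pos[OF nonneg a0 s, of 0] by simp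
  qed
  have var: "kh_var a (exp s) = D 2 s"
  proof -
    have "(\<lambda>k. (real k - c) ^ 2 * kh_prob a (exp s) k) sums (Phi a c 2 s / Phi a c 0 s)"
      by (rule moment_Phi[OF nonneg a0 s])
    hence "kh_var a (exp s) = Phi a c 2 s / Phi a c 0 s"
      unfolding kh_var_def mean by (simp add: sums_iff)
    thus ?thesis using Phi2 P0 unfolding P0_def by simp
  qed
  define \<sigma> where "\<sigma> = sqrt (D 2 s)"
  have \<sigma>: "\<sigma> > 0" unfolding \<sigma>_def using D2 by simp
  have M: "kh_norm_moment a j (exp s) = Phi a c j s / P0 / \<sigma> ^ j" for j
  proof -
    have "(\<lambda>k. (real k - c) ^ j * kh_prob a (exp s) k) sums (Phi a c j s / P0)"
      unfolding P0_def by (rule moment_Phi[OF nonneg a0 s])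
    hence "(\<lambda>k. (real k - c) ^ j * kh_prob a (exp s) k / \<sigma> ^ j) sums (Phi a c j s / P0 / \<sigma> ^ j)"
      by (rule sums_divide)
    hence "(\<lambda>k. ((real k - c) / \<sigma>) ^ j * kh_prob a (exp s) k) sums (Phi a c j s / P0 / \<sigma> ^ j)"
      by (simp add: power_divide)
    thus ?thesis unfolding kh_norm_moment_def mean var \<sigma>_def[symmetric] by (simp add: sums_iff)
  qed
  show "kh_norm_moment a 0 (exp s) = 1" unfolding M using P0 unfolding P0_def by simp
  fix j
  have "kh_norm_moment a (Suc j) (exp s)
      = (\<Sum>i\<le>j. real (j choose i) * Dc (Suc i) s * Phi a c (j - i) s) / P0 / \<sigma> ^ Suc j"
    unfolding M leibc ..
  also have "\<dots> = (\<Sum>i\<le>j. real (j choose i) * (Dc (Suc i) s / \<sigma> ^ Suc i) * (Phi a c (j - i) s / P0 / \<sigma> ^ (j - i)))"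
    unfolding sum_divide_distrib
  proof (intro sum.cong refl)
    fix i assume "i \<in> {..j}"
    hence "\<sigma> ^ Suc j = \<sigma> ^ Suc i * \<sigma> ^ (j - i)" by (simp add: power_add[symmetric])
    thus "real (j choose i) * Dc (Suc i) s * Phi a c (j - i) s / P0 / \<sigma> ^ Suc j
        = real (j choose i) * (Dc (Suc i) s / \<sigma> ^ Suc i) * (Phi a c (j - i) s / P0 / \<sigma> ^ (j - i))"
      using \<sigma> P0 by simp
  qed
  also have "\<dots> = (\<Sum>i\<le>j. real (j choose i) *
            (if Suc i = 1 then 0 else D (Suc i) s / sqrt (D 2 s) ^ Suc i) * kh_norm_moment a (j - i) (exp s))"
    unfolding M DcS \<sigma>_def by (intro sum.cong refl) auto
  finally show "kh_norm_moment a (Suc j) (exp s) = (\<Sum>i\<le>j. real (j choose i) *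
            (if Suc i = 1 then 0 else D (Suc i) s / sqrt (D 2 s) ^ Suc i) * kh_norm_moment a (j - i) (exp s))" .
qed


lemma sqrt_pow_powr: "x > 0 \<Longrightarrow> sqrt x ^ j = x powr (real j / 2)"
  by (simp add: powr_half_sqrt[symmetric] powr_power)

theorem theorem2p4:
  fixes a :: "nat \<Rightarrow> real" and n :: nat
  assumes nonneg: "\<forall>k. a k \<ge> 0"
    and a0: "a 0 > 0"
    and nonconst: "\<exists>k>0. a k \<noteq> 0"
    and radius: "conv_radius a > 0"
    and n3: "n \<ge> 3"
  shows "(\<forall>j\<in>{3..n}. ((\<lambda>t. kh_norm_moment a j t) \<longlongrightarrow> std_normal_moment j) (radius_filter a))
     \<longleftrightarrow> (\<forall>j\<in>{3..n}. ((\<lambda>s. (deriv ^^ j) (fulcrum a) s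
                                / ((deriv ^^ 2) (fulcrum a) s) powr (real j / 2))
                         \<longlongrightarrow> 0) (log_radius_filter a))"
proof -
  define D where "D = (\<lambda>i. (deriv ^^ i) (fulcrum a))"
  define \<mu> where "\<mu> = (\<lambda>s j. kh_norm_moment a j (exp s))"
  define cc where "cc = (\<lambda>s j. if j = 1 then 0 else D j s / sqrt (D 2 s) ^ j)"
  have evS: "eventually (\<lambda>s. ereal (exp s) < conv_radius a) (log_radius_filter a)"
    by (rule eventually_S[OF radius])
  have ev: "eventually (\<lambda>s. \<mu> s 0 = 1 \<and> cc s 1 = 0 \<and> cc s 2 = 1 \<and>
      (\<forall>j. \<mu> s (Suc j) = (\<Sum>i\<le>j. real (j choose i) * cc s (Suc i) * \<mu> s (j - i)))) (log_radius_filter a)"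
    using evS
  proof (rule eventually_mono)
    fix s assume s: "ereal (exp s) < conv_radius a"
    note pw = pointwise[OF nonneg a0 nonconst s]
    have "cc s 2 = 1" unfolding cc_def D_def using pw(1) by simp
    thus "\<mu> s 0 = 1 \<and> cc s 1 = 0 \<and> cc s 2 = 1 \<and>
      (\<forall>j. \<mu> s (Suc j) = (\<Sum>i\<le>j. real (j choose i) * cc s (Suc i) * \<mu> s (j - i)))"
      using pw(2,3) unfolding \<mu>_def cc_def D_def by simp
  qed
  have step1: "(\<forall>j\<in>{3..n}. ((\<lambda>t. kh_norm_moment a j t) \<longlongrightarrow> std_normal_moment j) (radius_filter a))
      \<longleftrightarrow> (\<forall>j\<in>{3..n}. ((\<lambda>s. \<mu> s j) \<longlongrightarrow> std_normal_moment j) (log_radius_filter a))"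
    unfolding \<mu>_def using filter_transfer[OF radius] by blast
  have step2: "(\<forall>j\<in>{3..n}. ((\<lambda>s. \<mu> s j) \<longlongrightarrow> std_normal_moment j) (log_radius_filter a))
      \<longleftrightarrow> (\<forall>j\<in>{3..n}. ((\<lambda>s. cc s j) \<longlongrightarrow> 0) (log_radius_filter a))"
    by (rule moment_cumulant_limits[OF ev nu0 nu1 nuS])
  have step3: "((\<lambda>s. cc s j) \<longlongrightarrow> 0) (log_radius_filter a) \<longleftrightarrow>
      ((\<lambda>s. (deriv ^^ j) (fulcrum a) s / ((deriv ^^ 2) (fulcrum a) s) powr (real j / 2)) \<longlongrightarrow> 0) (log_radius_filter a)"
    if j: "j \<in> {3..n}" for j
  proof (rule tendsto_cong)
    show "eventually (\<lambda>s. cc s j = (deriv ^^ j) (fulcrum a) s / ((deriv ^^ 2) (fulcrum a) s) powr (real j / 2))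
        (log_radius_filter a)"
      using evS
    proof (rule eventually_mono)
      fix s assume s: "ereal (exp s) < conv_radius a"
      have "D 2 s > 0" unfolding D_def using pointwise(1)[OF nonneg a0 nonconst s] by simp
      thus "cc s j = (deriv ^^ j) (fulcrum a) s / ((deriv ^^ 2) (fulcrum a) s) powr (real j / 2)"
        using j unfolding cc_def by (simp add: sqrt_pow_powr D_def)
    qed
  qed
  show ?thesis using step1 step2 step3 by blast
qed

end
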